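(* Let $b_1,\dots,b_m$ be background frames and $f$ a foreground frame, with a distance $d$ satisfying the triangle inequality and $d(b_j,b_{j+1})\le\delta$ for all $1\le j<m$. Suppose $b_i$ is a strong match for $f$, with $d(f,b_i)$ uniformly distributed on $[0,\Psi]$. Let the window size be $\gamma=\Psi/\delta$, assumed to be an integer with $1\le i-\gamma$ and $i+\gamma\le m$. Then the expected number of strong matches for $f$ in the entire window $b_{i-\gamma},\dots,b_{i+\gamma}$ (of size $2\gamma+1$) is at least $\gamma$.
   Context: A background frame $b$ is a strong match for a foreground frame $f$ if $d(f,b)\le\Psi$, where $\Psi>0$ is a fixed threshold. Randomized model: given that $\{f,b\}$ is a strong match, the distance $d(f,b)$ is modeled as a sample from the uniform distribution on $[0,\Psi]$. *)

theory Defs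
  imports "HOL-Probability.Probability"
begin

definition strong_match :: "('a \<Rightarrow> 'a \<Rightarrow> real) \<Rightarrow> real \<Rightarrow> 'a \<Rightarrow> 'a \<Rightarrow> bool" where
  "strong_match d \<Psi> f b \<longleftrightarrow> d f b \<le> \<Psi>"

end

theory Submission imports Defs begin
lemma sumlem:
  fixes i g :: nat assumes "g \<le> i"
  shows "(\<Sum>j\<in>{i-g..i+g}. real g - \<bar>real j - real i\<bar>) = real g ^ 2"
proof -
  let ?F = "\<lambda>j::nat. real g - \<bar>real j - real i\<bar>"
  have split: "{i-g..i+g} = {i-g..<i} \<union> {i..i+g}" using assms by auto
  have "sum ?F {i-g..i+g} = sum ?F {i-g..<i} + sum ?F {i..i+g}"
    unfolding split by (rule sum.union_disjoint) auto
  also have "sum ?F {i-g..<i} = (\<Sum>k\<in>{0..<g}. ?F (k + (i-g)))"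
    using sum.shift_bounds_nat_ivl[of ?F 0 "i-g" g] assms by simp
  also have "\<dots> = (\<Sum>k\<in>{0..<g}. real k)"
    by (rule sum.cong) (use assms in auto)
  also have "sum ?F {i..i+g} = (\<Sum>k\<in>{0..g}. ?F (k + i))"
    using sum.shift_bounds_cl_nat_ivl[of ?F 0 i g] by (simp add: add.commute)
  also have "\<dots> = (\<Sum>k\<in>{0..g}. real g - real k)"
    by (rule sum.cong) auto
  also have "\<dots> = real g * (real g + 1) - (\<Sum>k\<in>{0..g}. real k)"
    by (simp add: sum_subtractf)
  also have "(\<Sum>k\<in>{0..g}. real k) = (\<Sum>k\<in>{0..<g}. real k) + real g"
    by (simp add: atLeastLessThanSuc_atLeastAtMost[symmetric])
  finally show ?thesis by (simp add: power2_eq_square algebra_simps)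
qed

lemma chain:
  assumes "\<And>j. 1 \<le> j \<Longrightarrow> j < m \<Longrightarrow> d (b j) (b (Suc j)) \<le> (\<delta>::real)"
    and tri: "\<And>x y z. d x z \<le> d x y + d y z"
  shows "1 \<le> a \<Longrightarrow> a + Suc k \<le> m \<Longrightarrow> d (b a) (b (a+Suc k)) \<le> real (Suc k) * \<delta>"
proof (induction k)
  case 0 then show ?case using assms(1)[of a] by simp
next
  case (Suc k)
  have "d (b a) (b (a + Suc (Suc k))) \<le> d (b a) (b (a+Suc k)) + d (b (a+Suc k)) (b (Suc (a+Suc k)))"
    using tri by simp
  also have "\<dots> \<le> real (Suc k) * \<delta> + \<delta>"
    using Suc assms(1)[of "a+Suc k"] by (intro add_mono) auto
  finally show ?case by (simp add: algebra_simps)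
qed

theorem theorem3p6:
  fixes M :: "'w measure" and f :: "'w \<Rightarrow> 'a" and b :: "nat \<Rightarrow> 'a"
    and d :: "'a \<Rightarrow> 'a \<Rightarrow> real" and \<Psi> \<delta> :: real and m i \<gamma> :: nat
  assumes "prob_space M"
    and nonneg: "\<And>x y. 0 \<le> d x y"
    and sym: "\<And>x y. d x y = d y x"
    and tri: "\<And>x y z. d x z \<le> d x y + d y z"
    and step: "\<And>j. 1 \<le> j \<Longrightarrow> j < m \<Longrightarrow> d (b j) (b (Suc j)) \<le> \<delta>"
    and "\<Psi> > 0" and "\<delta> > 0"
    and meas: "(\<lambda>\<omega>. d (f \<omega>) (b i)) \<in> borel_measurable M"
    and unif: "distr M lborel (\<lambda>\<omega>. d (f \<omega>) (b i)) = uniform_measure lborel {0..\<Psi>}"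
    and gamma: "real \<gamma> = \<Psi> / \<delta>"
    and "1 \<le> int i - int \<gamma>" and "i + \<gamma> \<le> m"
  shows "(\<integral>\<^sup>+ \<omega>. (\<Sum>j\<in>{i - \<gamma>..i + \<gamma>}.
            indicator {\<omega>. strong_match d \<Psi> (f \<omega>) (b j)} \<omega>) \<partial>M) \<ge> ennreal (real \<gamma>)"
proof -
  define X where "X = (\<lambda>\<omega>. d (f \<omega>) (b i))"
  define W where "W = {i - \<gamma>..i + \<gamma>}"
  define c where "c = (\<lambda>j::nat. \<Psi> - \<bar>real j - real i\<bar> * \<delta>)"
  define A where "A = (\<lambda>j. {\<omega>\<in>space M. X \<omega> \<le> c j})"
  have gi: "\<gamma> + 1 \<le> i" using assms(11) by linarith
  have gpos: "real \<gamma> > 0" using gamma assms(6,7) by simp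
  have gd: "real \<gamma> * \<delta> = \<Psi>" unfolding gamma using assms(7) by simp
  have bound: "d (f \<omega>) (b j) \<le> X \<omega> + \<bar>real j - real i\<bar> * \<delta>" if "j \<in> W" for j \<omega>
  proof (cases "j = i")
    case True
    have "0 \<le> \<bar>real j - real i\<bar> * \<delta>" using assms(7) by simp
    then show ?thesis unfolding X_def True by linarith
  next
    case False
    have "d (b i) (b j) \<le> \<bar>real j - real i\<bar> * \<delta>"
    proof (cases "j < i")
      case True
      obtain k where "i = Suc (j + k)" using less_imp_Suc_add[OF True] by blast
      then have k: "i = j + Suc k" by simp
      have "d (b j) (b (j + Suc k)) \<le> real (Suc k) * \<delta>"
        using chain[where m=m and b=b and d=d and \<delta>=\<delta> and a=j and k=k, OF step tri] that gi assms(12) k unfolding W_def by auto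
      moreover have "\<bar>real j - real i\<bar> = real (Suc k)" using k by simp
      moreover have "d (b i) (b j) = d (b j) (b i)" by (rule sym)
      ultimately show ?thesis using k by metis
    next
      case False
      have "i < j" using False \<open>j \<noteq> i\<close> by simp
      obtain k where "j = Suc (i + k)" using less_imp_Suc_add[OF \<open>i < j\<close>] by blast
      then have k: "j = i + Suc k" by simp
      have "d (b i) (b (i + Suc k)) \<le> real (Suc k) * \<delta>"
        using chain[where m=m and b=b and d=d and \<delta>=\<delta> and a=i and k=k, OF step tri] that gi assms(12) k unfolding W_def by auto
      moreover have "\<bar>real j - real i\<bar> = real (Suc k)" using k by simp
      ultimately show ?thesis using k by metis
    qed
    moreover have "d (f \<omega>) (b j) \<le> d (f \<omega>) (b i) + d (b i) (b j)" by (rule tri)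
    ultimately show ?thesis unfolding X_def by linarith
  qed
  have cnn: "0 \<le> c j" "c j \<le> \<Psi>" if "j \<in> W" for j
  proof -
    have "\<bar>real j - real i\<bar> \<le> real \<gamma>" using that gi unfolding W_def by auto
    then have "\<bar>real j - real i\<bar> * \<delta> \<le> real \<gamma> * \<delta>" using assms(7) by (intro mult_right_mono) auto
    then show "0 \<le> c j" using gd unfolding c_def by simp
    show "c j \<le> \<Psi>" unfolding c_def using assms(7) by simp
  qed
  have Xm: "X \<in> measurable M lborel" using meas unfolding X_def by simp
  have Asets: "A j \<in> sets M" for j
    unfolding A_def using meas unfolding X_def by measurable
  have mono: "(\<Sum>j\<in>W. indicator (A j) \<omega>) \<le> (\<Sum>j\<in>W.
            indicator {\<omega>. strong_match d \<Psi> (f \<omega>) (b j)} \<omega> :: ennreal)" for \<omega>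
  proof (intro sum_mono)
    fix j assume j: "j \<in> W"
    show "indicator (A j) \<omega> \<le> (indicator {\<omega>. strong_match d \<Psi> (f \<omega>) (b j)} \<omega> :: ennreal)"
    proof (cases "\<omega> \<in> A j")
      case True
      then have "d (f \<omega>) (b j) \<le> \<Psi>" using bound[OF j, of \<omega>] unfolding A_def c_def by auto
      then show ?thesis using True by (simp add: strong_match_def indicator_def)
    qed simp
  qed
  have em: "emeasure M (A j) = ennreal (c j / \<Psi>)" if j: "j \<in> W" for j
  proof -
    have "emeasure M (A j) = emeasure (distr M lborel X) {..c j}"
    proof -
      have "A j = X -` {..c j} \<inter> space M" unfolding A_def by auto
      then show ?thesis by (simp add: emeasure_distr[OF Xm])
    qed
    also have "\<dots> = emeasure lborel ({0..\<Psi>} \<inter> {..c j}) / emeasure lborel {0..\<Psi>}"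
      using unif unfolding X_def by simp
    also have "{0..\<Psi>} \<inter> {..c j} = {0..c j}" using cnn[OF j] by auto
    finally show ?thesis using cnn[OF j] assms(6) by (simp add: divide_ennreal)
  qed
  have "ennreal (real \<gamma>) = ennreal ((\<Sum>j\<in>W. real \<gamma> - \<bar>real j - real i\<bar>) / real \<gamma>)"
    using sumlem[of \<gamma> i] gi gpos unfolding W_def by (simp add: power2_eq_square)
  also have "(\<Sum>j\<in>W. real \<gamma> - \<bar>real j - real i\<bar>) / real \<gamma> = (\<Sum>j\<in>W. c j / \<Psi>)"
    unfolding sum_divide_distrib
  proof (rule sum.cong)
    fix j assume "j \<in> W"
    show "(real \<gamma> - \<bar>real j - real i\<bar>) / real \<gamma> = c j / \<Psi>"
    proof -
      have "c j = (real \<gamma> - \<bar>real j - real i\<bar>) * \<delta>"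
        unfolding c_def gd[symmetric] by (simp add: left_diff_distrib)
      then have "c j / \<Psi> = ((real \<gamma> - \<bar>real j - real i\<bar>) * \<delta>) / (real \<gamma> * \<delta>)"
        using gd by simp
      also have "\<dots> = (real \<gamma> - \<bar>real j - real i\<bar>) / real \<gamma>"
        using assms(7) by (rule mult_divide_mult_cancel_right[OF less_imp_neq[symmetric]])
      finally show ?thesis by simp
    qed
  qed simp
  also have "ennreal (\<Sum>j\<in>W. c j / \<Psi>) = (\<Sum>j\<in>W. emeasure M (A j))"
  proof -
    have "(\<Sum>j\<in>W. ennreal (c j / \<Psi>)) = ennreal (\<Sum>j\<in>W. c j / \<Psi>)"
      by (rule sum_ennreal) (use cnn assms(6) in simp)
    moreover have "(\<Sum>j\<in>W. emeasure M (A j)) = (\<Sum>j\<in>W. ennreal (c j / \<Psi>))"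
      by (rule sum.cong) (simp_all add: em)
    ultimately show ?thesis by simp
  qed
  also have "\<dots> = (\<integral>\<^sup>+ \<omega>. (\<Sum>j\<in>W. indicator (A j) \<omega>) \<partial>M)"
    using Asets by (simp add: nn_integral_sum)
  also have "\<dots> \<le> (\<integral>\<^sup>+ \<omega>. (\<Sum>j\<in>W.
            indicator {\<omega>. strong_match d \<Psi> (f \<omega>) (b j)} \<omega>) \<partial>M)"
    by (rule nn_integral_mono) (rule mono)
  finally show ?thesis unfolding W_def .
qed

end
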